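(* Two directed graphs $G_1,G_2$ on $[n]$ without self-loops are distribution equivalent, i.e. $\mathcal{P}(G_1)=\mathcal{P}(G_2)$, if and only if there exists a permutation matrix $P\in\{0,1\}^{n\times n}$ such that $I+B_{G_2}=P(I+B_{G_1})$.
   Context: For a directed graph $G$ on $[n]$ without self-loops, $B_G\in\{0,1\}^{n\times n}$ is its adjacency matrix with $[B_G]_{ij}=1$ iff there is an edge $j\to i$. A linear structural causal model consistent with $G$ is $\mathbf{x}=W\mathbf{x}+\mathbf{e}$ with $W\in\mathbb{R}^{n\times n}$ such that $\{(i,j):W_{ij}\neq0\}=\{(i,j):[B_G]_{ij}=1\}$ and $I-W$ invertible, and noise $\mathbf{e}$ with jointly independent components, at most one of which is Gaussian. $\mathcal{P}(G)$ is the set of all distributions of $\mathbf{x}=(I-W)^{-1}\mathbf{e}$ over all such $W$ and noise distributions. *)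

theory Defs
  imports "HOL-Probability.Probability"
begin

text \<open>A directed graph on the finite vertex type 'n is an edge set E; (j,i) \<in> E means j \<rightarrow> i.\<close>

definition no_self_loops :: "('n \<times> 'n) set \<Rightarrow> bool" where
  "no_self_loops E \<longleftrightarrow> (\<forall>i. (i, i) \<notin> E)"

definition adj_matrix :: "('n::finite \<times> 'n) set \<Rightarrow> real^'n^'n" where
  "adj_matrix E = (\<chi> i j. if (j, i) \<in> E then 1 else 0)"

definition permutation_matrix :: "real^'n^'n::finite \<Rightarrow> bool" where
  "permutation_matrix P \<longleftrightarrow>
     (\<forall>i j. P $ i $ j = 0 \<or> P $ i $ j = 1) \<and>
     (\<forall>i. \<exists>!j. P $ i $ j = 1) \<and>
     (\<forall>j. \<exists>!i. P $ i $ j = 1)"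

definition is_gaussian :: "real measure \<Rightarrow> bool" where
  "is_gaussian M \<longleftrightarrow> (\<exists>m \<sigma>. \<sigma> > 0 \<and> M = density lborel (normal_density m \<sigma>))"

definition lsem_weights :: "('n::finite \<times> 'n) set \<Rightarrow> real^'n^'n \<Rightarrow> bool" where
  "lsem_weights E W \<longleftrightarrow>
     (\<forall>i j. W $ i $ j \<noteq> 0 \<longleftrightarrow> adj_matrix E $ i $ j = 1) \<and> invertible (mat 1 - W)"

text \<open>Admissible noise: jointly independent components (i.e. joint law is the product
  of the marginals \<mu> i), at most one of which is Gaussian.\<close>
definition lsem_noise :: "('n::finite \<Rightarrow> real measure) \<Rightarrow> bool" where
  "lsem_noise \<mu> \<longleftrightarrow>
     (\<forall>i. prob_space (\<mu> i) \<and> sets (\<mu> i) = sets borel) \<and>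
     card {i. is_gaussian (\<mu> i)} \<le> 1"

definition lsem_models :: "('n::finite \<times> 'n) set \<Rightarrow> (real^'n) measure set" where
  "lsem_models E =
     {distr (PiM UNIV \<mu>) borel (\<lambda>e. matrix_inv (mat 1 - W) *v vec_lambda e) | W \<mu>.
        lsem_weights E W \<and> lsem_noise \<mu>}"

end

theory Submission
  imports Defs
begin


lemma matrix_inv_props:
  fixes A :: "real^'n::finite^'n"
  assumes "invertible A"
  shows "A ** matrix_inv A = mat 1" "matrix_inv A ** A = mat 1"
proof -
  have "\<exists>A'. A ** A' = mat 1 \<and> A' ** A = mat 1" using assms unfolding invertible_def by blast
  from someI_ex[OF this] show "A ** matrix_inv A = mat 1" "matrix_inv A ** A = mat 1"
    unfolding matrix_inv_def by auto
qed

lemma invertible_matrix_inv: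
  fixes A :: "real^'n::finite^'n"
  assumes "invertible A"
  shows "invertible (matrix_inv A)"
  using matrix_inv_props[OF assms] unfolding invertible_def by blast

lemma matrix_inv_apply_eq:
  fixes A :: "real^'n::finite^'n"
  assumes "invertible A"
  shows "matrix_inv A *v y = t \<longleftrightarrow> y = A *v t"
  using matrix_inv_props[OF assms]
  by (metis matrix_vector_mul_assoc matrix_vector_mul_lid)

lemma mat1_entry: "(mat 1 :: real^'n::finite^'n) $ i $ k = (if i = k then 1 else 0)"
  by (simp add: mat_def)

lemma adj_entry: "adj_matrix E $ i $ k = (if (k, i) \<in> E then 1 else 0)"
  by (simp add: adj_matrix_def)

lemma weights_pattern:
  assumes "no_self_loops E" "lsem_weights E W"
  shows "(mat 1 - W) $ i $ k \<noteq> 0 \<longleftrightarrow> (mat 1 + adj_matrix E) $ i $ k = 1"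
    and "(mat 1 + adj_matrix E) $ i $ k = 0 \<or> (mat 1 + adj_matrix E) $ i $ k = 1"
proof -
  have W: "W $ i $ k \<noteq> 0 \<longleftrightarrow> (k, i) \<in> E" using assms(2) unfolding lsem_weights_def adj_entry by simp
  have nl: "(i, i) \<notin> E" using assms(1) unfolding no_self_loops_def by simp
  show "(mat 1 - W) $ i $ k \<noteq> 0 \<longleftrightarrow> (mat 1 + adj_matrix E) $ i $ k = 1"
    using W nl by (cases "i = k") (auto simp: mat1_entry adj_entry)
  show "(mat 1 + adj_matrix E) $ i $ k = 0 \<or> (mat 1 + adj_matrix E) $ i $ k = 1"
    using nl by (cases "i = k") (auto simp: mat1_entry adj_entry)
qed

lemma perm_mult_entry:
  fixes X :: "real^'n::finite^'n"
  shows "((\<chi> i j. if j = \<sigma> i then c i else 0) ** X) $ i $ k = c i * X $ (\<sigma> i) $ k"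
proof -
  have "((\<chi> i j. if j = \<sigma> i then c i else 0) ** X) $ i $ k = (\<Sum>j\<in>UNIV. (if j = \<sigma> i then c i else 0) * X $ j $ k)"
    unfolding matrix_matrix_mult_def by simp
  also have "\<dots> = (\<Sum>j\<in>UNIV. (if j = \<sigma> i then c i * X $ j $ k else 0))"
    by (rule sum.cong) auto
  also have "\<dots> = c i * X $ (\<sigma> i) $ k" by (simp add: sum.delta')
  finally show ?thesis .
qed



lemma prod_eq_pow2:
  fixes f :: "'a \<Rightarrow> nat"
  assumes "finite I" "\<And>i. i \<in> I \<Longrightarrow> f i \<ge> 2" "prod f I = 2 ^ card I" "i0 \<in> I"
  shows "f i0 = 2"
proof (rule ccontr)
  assume "f i0 \<noteq> 2"
  with assms(2,4) have "f i0 \<ge> 3" by fastforce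
  have "prod f I = f i0 * prod f (I - {i0})"
    using assms(1,4) by (simp add: prod.remove)
  moreover have "prod f (I - {i0}) \<ge> prod (\<lambda>_. 2) (I - {i0})"
    using assms(2) by (intro prod_mono) auto
  moreover have "prod (\<lambda>_. 2::nat) (I - {i0}) = 2 ^ (card I - 1)"
    using assms(1,4) by simp
  moreover have "(2::nat) ^ card I = 2 * 2 ^ (card I - 1)"
    using assms(1,4) by (metis card_gt_0_iff empty_iff power_eq_if less_numeral_extra(3))
  ultimately have "2 * 2 ^ (card I - 1) \<ge> 3 * (2::nat) ^ (card I - 1)"
    using \<open>f i0 \<ge> 3\<close> assms(3) mult_le_mono[OF \<open>f i0 \<ge> 3\<close>, of "2 ^ (card I - 1)" "prod f (I - {i0})"]
    by linarith
  moreover have "(2::nat) ^ (card I - 1) > 0" by simp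
  ultimately show False by linarith
qed

lemma card_cube: "card {u::real^'n::finite. \<forall>i. u$i \<in> S i} = (\<Prod>i\<in>UNIV. card (S i))"
  and finite_cube: "(\<forall>i. finite (S i)) \<Longrightarrow> finite {u::real^'n::finite. \<forall>i. u$i \<in> S i}"
proof -
  have eq: "{u::real^'n::finite. \<forall>i. u$i \<in> S i} = vec_lambda ` (PiE UNIV S)"
  proof
    show "{u::real^'n::finite. \<forall>i. u$i \<in> S i} \<subseteq> vec_lambda ` (PiE UNIV S)"
    proof
      fix u :: "real^'n" assume "u \<in> {u. \<forall>i. u$i \<in> S i}"
      then have "vec_nth u \<in> PiE UNIV S" by auto
      then show "u \<in> vec_lambda ` (PiE UNIV S)" by (metis image_eqI vec_nth_inverse)
    qed
  qed auto
  have inj: "inj_on (vec_lambda :: ('n \<Rightarrow> real) \<Rightarrow> real^'n) X" for X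
    by (metis inj_onI vec_lambda_inverse UNIV_I)
  show "card {u::real^'n::finite. \<forall>i. u$i \<in> S i} = (\<Prod>i\<in>UNIV. card (S i))"
    unfolding eq by (simp add: card_image[OF inj] card_PiE)
  show "(\<forall>i. finite (S i)) \<Longrightarrow> finite {u::real^'n::finite. \<forall>i. u$i \<in> S i}"
    unfolding eq by (intro finite_imageI finite_PiE) auto
qed

lemma mv_axis: "((A::real^'n::finite^'m) *v axis j 1) $ i = A $ i $ j"
  by (simp add: matrix_vector_mult_basis column_def)

lemma comb:
  fixes A :: "real^'n::finite^'n" and S :: "'n \<Rightarrow> real set"
  assumes inv: "invertible A"
    and eq: "\<And>u. (\<forall>i. u$i \<in> {0,1}) \<longleftrightarrow> (\<forall>i. (A *v u)$i \<in> S i)"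
    and aj: "A$i$j \<noteq> 0" and ak: "A$i$k \<noteq> 0"
  shows "j = k"
proof (rule ccontr)
  assume jk: "j \<noteq> k"
  define C where "C = {u::real^'n. \<forall>i. u$i \<in> {0,1}}"
  define Q where "Q = {w::real^'n. \<forall>i. w$i \<in> S i}"
  have img: "(\<lambda>u. A *v u) ` C = Q"
  proof
    show "(\<lambda>u. A *v u) ` C \<subseteq> Q" using eq unfolding C_def Q_def by blast
    show "Q \<subseteq> (\<lambda>u. A *v u) ` C"
    proof
      fix w assume w: "w \<in> Q"
      define u where "u = matrix_inv A *v w"
      have Au: "A *v u = w" unfolding u_def using matrix_inv_props[OF inv]
        by (metis matrix_vector_mul_assoc matrix_vector_mul_lid)
      then have "u \<in> C" using eq w unfolding C_def Q_def by auto
      then show "w \<in> (\<lambda>u. A *v u) ` C" using Au by blast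
    qed
  qed
  have zero: "0 \<in> S l" for l using eq[of 0] by simp
  have S_eq: "S l = (\<lambda>u. (A *v u)$l) ` C" for l
  proof
    show "(\<lambda>u. (A *v u)$l) ` C \<subseteq> S l" using eq unfolding C_def by blast
    show "S l \<subseteq> (\<lambda>u. (A *v u)$l) ` C"
    proof
      fix c assume c: "c \<in> S l"
      define w :: "real^'n" where "w = (\<chi> m. if m = l then c else 0)"
      have "w \<in> Q" using c zero unfolding Q_def w_def by auto
      then obtain u where u: "u \<in> C" "w = A *v u" using img by blast
      have "w $ l = c" by (simp add: w_def)
      then have "c = (A *v u)$l" using u(2) by simp
      then show "c \<in> (\<lambda>u. (A *v u)$l) ` C" using u(1) by (rule image_eqI)
    qed
  qed
  have finC: "finite C" unfolding C_def by (rule finite_cube) auto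
  have "card C = (\<Prod>i\<in>(UNIV::'n set). card {0,1::real})"
    unfolding C_def by (rule card_cube)
  then have cardC: "card C = 2 ^ card (UNIV::'n set)" by (simp add: numeral_2_eq_2)
  have finS: "finite (S l)" for l unfolding S_eq using finC by simp
  have cardQ: "card Q = (\<Prod>l\<in>UNIV. card (S l))" unfolding Q_def by (rule card_cube)
  have "card ((\<lambda>u. A *v u) ` C) = card C"
    by (rule card_image, rule inj_on_subset[OF inj_matrix_vector_mult[OF inv]], simp)
  then have "card Q = card C" using img by simp
  then have prodeq: "(\<Prod>l\<in>UNIV. card (S l)) = 2 ^ card (UNIV::'n set)" using cardQ cardC by simp
  have ax: "axis m 1 \<in> C" for m unfolding C_def by (simp add: axis_def)
  have ge2: "card (S l) \<ge> 2" for l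
  proof -
    have "\<exists>m. A$l$m \<noteq> 0"
    proof (rule ccontr)
      assume "\<not> (\<exists>m. A$l$m \<noteq> 0)"
      then have "(A *v x)$l = 0" for x by (simp add: matrix_vector_mult_def)
      moreover have "A *v (matrix_inv A *v axis l 1) = axis l 1" using matrix_inv_props[OF inv]
        by (simp add: matrix_vector_mul_assoc)
      moreover have "(axis l 1 :: real^'n) $ l = 1" by (simp add: axis_def)
      ultimately show False by (metis zero_neq_one)
    qed
    then obtain m where m: "A$l$m \<noteq> 0" by blast
    have "A$l$m = (A *v axis m 1)$l" by (simp add: mv_axis)
    then have "A$l$m \<in> S l" unfolding S_eq using ax[of m] by (rule image_eqI)
    then have "{0, A$l$m} \<subseteq> S l" using zero by auto
    then have "card {0, A$l$m} \<le> card (S l)" using finS by (rule card_mono[rotated])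
    then show ?thesis using m by simp
  qed
  have c2: "card (S i) = 2"
    using prod_eq_pow2[of UNIV "\<lambda>l. card (S l)" i] prodeq ge2 by auto
  have "A$i$j = (A *v axis j 1)$i" "A$i$k = (A *v axis k 1)$i" by (simp_all add: mv_axis)
  then have inS: "A$i$j \<in> S i" "A$i$k \<in> S i" unfolding S_eq using ax by (auto intro: image_eqI)
  have "axis j 1 + axis k 1 \<in> C" using jk unfolding C_def by (auto simp: axis_def)
  moreover have "A$i$j + A$i$k = (A *v (axis j 1 + axis k 1))$i"
    by (simp add: matrix_vector_right_distrib mv_axis)
  ultimately have "A$i$j + A$i$k \<in> S i" unfolding S_eq by (auto intro: image_eqI)
  have sub: "{0, A$i$j} \<subseteq> S i" using zero inS by auto
  have "card {0, A$i$j} = 2" using aj by simp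
  then have Seq: "S i = {0, A$i$j}" using card_subset_eq[OF finS sub] c2 by simp
  have "A$i$k = A$i$j" using inS Seq ak by auto
  moreover have "A$i$j + A$i$k \<in> {0, A$i$j}" using \<open>A$i$j + A$i$k \<in> S i\<close> Seq by simp
  ultimately show False using aj ak by auto
qed



lemma vec_meas:
  assumes "\<And>i. sets (M i) = sets (borel :: real measure)"
  shows "(\<lambda>e. vec_lambda e :: real^'n::finite) \<in> measurable (PiM UNIV M) borel"
proof (subst borel_measurable_euclidean_space, intro ballI)
  fix b :: "real^'n" assume "b \<in> Basis"
  then obtain i where b: "b = axis i 1" by (auto simp: Basis_vec_def)
  have "(\<lambda>e. e i) \<in> measurable (PiM UNIV M) (M i)" by (rule measurable_component_singleton) simp
  then have m: "(\<lambda>e. e i) \<in> measurable (PiM UNIV M) borel" 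
    by (subst measurable_cong_sets[OF refl assms[of i, symmetric]])
  have "(\<lambda>e. vec_lambda e \<bullet> b) = (\<lambda>e. e i)" unfolding b
    by (simp add: cart_eq_inner_axis[symmetric])
  then show "(\<lambda>e. vec_lambda e \<bullet> b) \<in> borel_measurable (PiM UNIV M)" using m by simp
qed


lemma lin_meas: "(\<lambda>x. (A::real^'n::finite^'m::finite) *v x) \<in> borel_measurable borel"
  by (intro borel_measurable_continuous_onI linear_continuous_on matrix_vector_mul_bounded_linear)

lemma model_meas:
  assumes "\<And>i. sets (M i) = sets (borel :: real measure)"
  shows "(\<lambda>e. (A::real^'n::finite^'n) *v vec_lambda e) \<in> measurable (PiM UNIV M) borel"
  using measurable_comp[OF vec_meas[OF assms] lin_meas[of A]] by (simp add: o_def)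

lemma noise_props:
  assumes "lsem_noise \<mu>"
  shows "prob_space (\<mu> i)" "sets (\<mu> i) = sets borel" "space (\<mu> i) = UNIV"
proof -
  show "prob_space (\<mu> i)" "sets (\<mu> i) = sets borel" using assms unfolding lsem_noise_def by auto
  then show "space (\<mu> i) = UNIV" by (metis sets_eq_imp_space_eq space_borel)
qed

lemma model_singleton:
  fixes W :: "real^'n::finite^'n"
  assumes W: "invertible (mat 1 - W)" and N: "lsem_noise \<mu>"
  shows "emeasure (distr (PiM UNIV \<mu>) borel (\<lambda>e. matrix_inv (mat 1 - W) *v vec_lambda e)) {t}
       = (\<Prod>i\<in>UNIV. emeasure (\<mu> i) {((mat 1 - W) *v t)$i})"
proof -
  interpret product_prob_space \<mu> by (rule product_prob_spaceI) (rule noise_props[OF N])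
  have sp: "space (PiM UNIV \<mu>) = UNIV" using noise_props(3)[OF N] by (simp add: space_PiM PiE_UNIV_domain)
  have eqv: "(matrix_inv (mat 1 - W) *v vec_lambda e = t) \<longleftrightarrow> (\<forall>i. e i = ((mat 1 - W) *v t)$i)" for e
    unfolding matrix_inv_apply_eq[OF W] by (simp add: vec_eq_iff)
  have pre: "(\<lambda>e. matrix_inv (mat 1 - W) *v vec_lambda e) -` {t} \<inter> space (PiM UNIV \<mu>)
      = PiE UNIV (\<lambda>i. {((mat 1 - W) *v t)$i})"
    unfolding sp PiE_UNIV_domain using eqv by blast
  show ?thesis
    apply (subst emeasure_distr)
      apply (rule model_meas, rule noise_props(2)[OF N])
     apply simp
    apply (subst pre)
    apply (rule emeasure_PiM)
    using noise_props(2)[OF N] by auto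
qed

definition bern :: "real measure" where
  "bern = distr (measure_pmf (bernoulli_pmf (1/2))) borel (\<lambda>b. if b then 1 else 0)"

lemma bern_prob: "prob_space bern"
  unfolding bern_def by (rule prob_space.prob_space_distr) (auto intro: prob_space_measure_pmf)

lemma bern_sets: "sets bern = sets borel"
  unfolding bern_def by simp

lemma bern_single: "emeasure bern {c} \<noteq> 0 \<longleftrightarrow> c \<in> {0,1}"
proof -
  have "emeasure bern {c} = emeasure (measure_pmf (bernoulli_pmf (1/2))) ((\<lambda>b. if b then 1 else 0) -` {c} \<inter> UNIV)"
    unfolding bern_def by (subst emeasure_distr) auto
  moreover have "(\<lambda>b. if b then 1 else (0::real)) -` {c} \<inter> UNIV = (if c = 1 then {True} else if c = 0 then {False} else {})"
    by (auto split: if_splits)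
  ultimately show ?thesis by (auto simp: emeasure_pmf_single)
qed

lemma gaussian_single:
  assumes "is_gaussian \<nu>"
  shows "emeasure \<nu> {c} = 0"
proof -
  obtain m s where \<nu>: "\<nu> = density lborel (normal_density m s)"
    using assms unfolding is_gaussian_def by blast
  have "emeasure \<nu> {c} = (\<integral>\<^sup>+ x. normal_density m s x * indicator {c} x \<partial>lborel)"
    unfolding \<nu> by (subst emeasure_density) auto
  also have "\<dots> = (\<integral>\<^sup>+ x. ennreal (normal_density m s x) * indicator {c} x \<partial>lborel)"
    by (intro nn_integral_cong) (auto simp: indicator_def)
  also have "\<dots> = 0" by (rule nn_integral_null_set) (auto simp: null_sets_def)
  finally show ?thesis .
qed

lemma bern_not_gaussian: "\<not> is_gaussian bern"
  using gaussian_single[of bern 1] bern_single[of 1] by auto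



lemma exists_weights:
  fixes E :: "('n::finite \<times> 'n) set"
  shows "\<exists>W. lsem_weights E W"
proof -
  define c :: real where "c = 1 / (2 * real CARD('n))"
  have cpos: "c > 0" unfolding c_def by simp
  have cn: "real CARD('n) * c = 1/2" unfolding c_def by simp
  define W where "W = c *\<^sub>R adj_matrix E"
  have Wij: "W $ i $ j = (if (j, i) \<in> E then c else 0)" for i j
    unfolding W_def by (simp add: adj_entry)
  have pat: "\<forall>i j. W $ i $ j \<noteq> 0 \<longleftrightarrow> adj_matrix E $ i $ j = 1"
    using cpos by (simp add: Wij adj_entry)
  have ker: "\<forall>x. (mat 1 - W) *v x = 0 \<longrightarrow> x = 0"
  proof (intro allI impI)
    fix x :: "real^'n" assume "(mat 1 - W) *v x = 0"
    then have fx: "x = W *v x" by (simp add: matrix_vector_mult_diff_rdistrib)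
    define m where "m = Max (range (\<lambda>i. \<bar>x$i\<bar>))"
    have mge: "\<bar>x$i\<bar> \<le> m" for i unfolding m_def by (rule Max_ge) auto
    have "m \<in> range (\<lambda>i. \<bar>x$i\<bar>)" unfolding m_def by (rule Max_in) auto
    then obtain i0 where i0: "m = \<bar>x$i0\<bar>" by blast
    have e1: "x$i0 = (W *v x)$i0" using arg_cong[OF fx, of "\<lambda>v. v$i0"] .
    have e2: "(W *v x)$i0 = (\<Sum>j\<in>UNIV. W$i0$j * x$j)" by (simp add: matrix_vector_mult_def)
    have "\<bar>x$i0\<bar> = \<bar>\<Sum>j\<in>UNIV. W$i0$j * x$j\<bar>" using e1 e2 by simp
    also have "\<dots> \<le> (\<Sum>j\<in>UNIV. \<bar>W$i0$j * x$j\<bar>)" by (rule sum_abs)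
    also have "\<dots> \<le> (\<Sum>j\<in>(UNIV::'n set). c * m)"
    proof (rule sum_mono)
      fix j
      have "\<bar>W$i0$j\<bar> \<le> c" using cpos by (simp add: Wij)
      then show "\<bar>W$i0$j * x$j\<bar> \<le> c * m"
        by (simp add: abs_mult mult_mono mge cpos less_imp_le)
    qed
    also have "\<dots> = m / 2" using cn by (simp add: mult.assoc[symmetric])
    finally have "m \<le> 0" using i0 by simp
    then show "x = 0" using mge by (simp add: vec_eq_iff) (meson abs_le_zero_iff order_trans)
  qed
  have "invertible (mat 1 - W)"
    using ker matrix_left_invertible_ker invertible_left_inverse by blast
  then show ?thesis using pat unfolding lsem_weights_def by blast
qed

lemma prod_ennreal_nz:
  fixes f :: "'a \<Rightarrow> ennreal"
  assumes "finite I"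
  shows "prod f I \<noteq> 0 \<longleftrightarrow> (\<forall>i\<in>I. f i \<noteq> 0)"
  using assms by (simp add: prod_zero_iff)



lemma row_nonzero:
  fixes A :: "real^'n::finite^'n"
  assumes inv: "invertible A"
  shows "\<exists>j. A$i$j \<noteq> 0"
proof (rule ccontr)
  assume "\<not> (\<exists>j. A$i$j \<noteq> 0)"
  then have "(A *v x)$i = 0" for x by (simp add: matrix_vector_mult_def)
  moreover have "A *v (matrix_inv A *v axis i 1) = axis i 1" using matrix_inv_props[OF inv]
    by (simp add: matrix_vector_mul_assoc)
  moreover have "(axis i 1 :: real^'n) $ i = 1" by (simp add: axis_def)
  ultimately show False by (metis zero_neq_one)
qed

lemma col_nonzero:
  fixes A :: "real^'n::finite^'n"
  assumes inv: "invertible A"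
  shows "\<exists>i. A$i$j \<noteq> 0"
proof (rule ccontr)
  assume "\<not> (\<exists>i. A$i$j \<noteq> 0)"
  then have "A *v axis j 1 = 0" by (simp add: vec_eq_iff mv_axis)
  moreover have "A *v 0 = 0" by simp
  moreover have "axis j 1 \<noteq> (0::real^'n)" by (simp add: axis_def vec_eq_iff) 
  ultimately have "A *v axis j 1 = A *v 0" by simp
  then have "axis j 1 = (0::real^'n)" by (rule injD[OF inj_matrix_vector_mult[OF inv]])
  then show False using \<open>axis j 1 \<noteq> 0\<close> by simp
qed

lemma nz_mult: "(a::real) \<noteq> 0 \<Longrightarrow> x = a * y \<Longrightarrow> (x \<noteq> 0 \<longleftrightarrow> y \<noteq> 0)"
  by simp

lemma dir1:
  fixes G1 G2 :: "('n::finite \<times> 'n) set"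
  assumes nl1: "no_self_loops G1" and nl2: "no_self_loops G2"
    and sub: "lsem_models G1 \<subseteq> lsem_models G2"
  shows "\<exists>\<sigma>. bij \<sigma> \<and> (\<forall>i k. (mat 1 + adj_matrix G2) $ i $ k = (mat 1 + adj_matrix G1) $ (\<sigma> i) $ k)"
proof -
  obtain W1 where W1: "lsem_weights G1 W1" using exists_weights by blast
  have inv1: "invertible (mat 1 - W1)" using W1 unfolding lsem_weights_def by blast
  define \<mu>1 :: "'n \<Rightarrow> real measure" where "\<mu>1 = (\<lambda>_. bern)"
  have N1: "lsem_noise \<mu>1" unfolding lsem_noise_def \<mu>1_def
    using bern_prob bern_sets bern_not_gaussian by simp
  define m where "m = distr (PiM UNIV \<mu>1) borel (\<lambda>e. matrix_inv (mat 1 - W1) *v vec_lambda e)"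
  have "m \<in> lsem_models G1" unfolding m_def lsem_models_def using W1 N1 by blast
  with sub have "m \<in> lsem_models G2" by blast
  then obtain W2 \<mu>2 where m2: "m = distr (PiM UNIV \<mu>2) borel (\<lambda>e. matrix_inv (mat 1 - W2) *v vec_lambda e)"
    and W2: "lsem_weights G2 W2" and N2: "lsem_noise \<mu>2"
    unfolding lsem_models_def by blast
  have inv2: "invertible (mat 1 - W2)" using W2 unfolding lsem_weights_def by blast
  define S where "S i = {c. emeasure (\<mu>2 i) {c} \<noteq> 0}" for i
  have key: "(\<forall>i. ((mat 1 - W1) *v t)$i \<in> {0,1}) \<longleftrightarrow> (\<forall>i. ((mat 1 - W2) *v t)$i \<in> S i)" for t
  proof -
    have "(\<Prod>i\<in>UNIV. emeasure (\<mu>1 i) {((mat 1 - W1) *v t)$i}) = (\<Prod>i\<in>UNIV. emeasure (\<mu>2 i) {((mat 1 - W2) *v t)$i})"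
      using model_singleton[OF inv1 N1, of t] model_singleton[OF inv2 N2, of t] m2 unfolding m_def by simp
    then have "(\<Prod>i\<in>UNIV. emeasure (\<mu>1 i) {((mat 1 - W1) *v t)$i}) \<noteq> 0 \<longleftrightarrow> (\<Prod>i\<in>UNIV. emeasure (\<mu>2 i) {((mat 1 - W2) *v t)$i}) \<noteq> 0"
      by simp
    then show ?thesis unfolding prod_ennreal_nz[OF finite] S_def \<mu>1_def
      using bern_single by simp
  qed
  define A where "A = (mat 1 - W2) ** matrix_inv (mat 1 - W1)"
  have invA: "invertible A" unfolding A_def by (intro invertible_mult inv2 invertible_matrix_inv inv1)
  have keyA: "(\<forall>i. u$i \<in> {0,1}) \<longleftrightarrow> (\<forall>i. (A *v u)$i \<in> S i)" for u
  proof -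
    have "(mat 1 - W1) *v (matrix_inv (mat 1 - W1) *v u) = u" using matrix_inv_props[OF inv1]
      by (simp add: matrix_vector_mul_assoc)
    moreover have "(mat 1 - W2) *v (matrix_inv (mat 1 - W1) *v u) = A *v u" unfolding A_def
      by (simp add: matrix_vector_mul_assoc)
    ultimately show ?thesis using key[of "matrix_inv (mat 1 - W1) *v u"] by simp
  qed
  define \<sigma> where "\<sigma> i = (SOME j. A$i$j \<noteq> 0)" for i
  have s1: "A$i$(\<sigma> i) \<noteq> 0" for i unfolding \<sigma>_def using row_nonzero[OF invA, of i] by (rule someI_ex)
  have s2: "j = \<sigma> i" if h: "A$i$j \<noteq> 0" for i j by (rule comb[OF invA keyA h s1])
  have "surj \<sigma>"
  proof -
    have "\<exists>i. j = \<sigma> i" for j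
    proof -
      obtain i where "A$i$j \<noteq> 0" using col_nonzero[OF invA, of j] by blast
      then show ?thesis using s2 by blast
    qed
    then show ?thesis unfolding surj_def by blast
  qed
  moreover have "inj \<sigma>" by (rule finite_UNIV_surj_inj[OF finite \<open>surj \<sigma>\<close>])
  ultimately have bij: "bij \<sigma>" unfolding bij_def by blast
  define a where "a i = A$i$(\<sigma> i)" for i
  have Aform: "A = (\<chi> i j. if j = \<sigma> i then a i else 0)"
    unfolding vec_eq_iff a_def
  proof (intro allI)
    fix i j show "A$i$j = (\<chi> i j. if j = \<sigma> i then A$i$(\<sigma> i) else 0) $ i $ j"
      using s2[of i j] by (cases "j = \<sigma> i") auto
  qed
  have "A ** (mat 1 - W1) = mat 1 - W2" unfolding A_def matrix_mul_assoc[symmetric] matrix_inv_props(2)[OF inv1]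
    by simp
  then have ent: "(mat 1 - W2) $ i $ k = a i * (mat 1 - W1) $ (\<sigma> i) $ k" for i k
    using perm_mult_entry[of \<sigma> a "mat 1 - W1" i k] unfolding Aform[symmetric] by simp
  have "(mat 1 + adj_matrix G2) $ i $ k = (mat 1 + adj_matrix G1) $ (\<sigma> i) $ k" for i k
  proof -
    have nz: "(mat 1 - W2) $ i $ k \<noteq> 0 \<longleftrightarrow> (mat 1 - W1) $ (\<sigma> i) $ k \<noteq> 0"
      using nz_mult[OF s1[of i] ent[of i k, unfolded a_def]] .
    have "(mat 1 + adj_matrix G2) $ i $ k = 1 \<longleftrightarrow> (mat 1 + adj_matrix G1) $ (\<sigma> i) $ k = 1"
      using weights_pattern(1)[OF nl2 W2, of i k] weights_pattern(1)[OF nl1 W1, of "\<sigma> i" k] nz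
      by blast
    then show ?thesis using weights_pattern(2)[OF nl2 W2, of i k] weights_pattern(2)[OF nl1 W1, of "\<sigma> i" k]
      by auto
  qed
  then show ?thesis using bij by blast
qed



lemma gauss_scale:
  assumes G: "is_gaussian \<nu>" and c: "c \<noteq> 0"
  shows "is_gaussian (distr \<nu> borel (\<lambda>x. c * x))"
proof -
  obtain m s where s: "s > 0" and \<nu>: "\<nu> = density lborel (normal_density m s)"
    using G unfolding is_gaussian_def by blast
  interpret prob_space \<nu> unfolding \<nu> using prob_space_normal_density s by blast
  have d: "distributed \<nu> lborel (\<lambda>x. x) (normal_density m s)"
    unfolding distributed_def
  proof (intro conjI)
    show "distr \<nu> lborel (\<lambda>x. x) = density lborel (\<lambda>x. ennreal (normal_density m s x))"
      unfolding \<nu> by (rule distr_id2) simp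
    show "(\<lambda>x. ennreal (normal_density m s x)) \<in> borel_measurable lborel" by simp
    show "(\<lambda>x. x) \<in> measurable \<nu> lborel" unfolding \<nu> by (simp add: measurable_ident_sets)
  qed
  have "distributed \<nu> lborel (\<lambda>x. 0 + c * x) (normal_density (0 + c * m) (\<bar>c\<bar> * s))"
    by (rule normal_density_affine[OF d s c])
  then have "distr \<nu> lborel (\<lambda>x. 0 + c * x) = density lborel (normal_density (0 + c * m) (\<bar>c\<bar> * s))"
    unfolding distributed_def by blast
  moreover have "distr \<nu> borel (\<lambda>x. c * x) = distr \<nu> lborel (\<lambda>x. 0 + c * x)"
    by (rule distr_cong) simp_all
  ultimately show ?thesis unfolding is_gaussian_def using s c
    by (intro exI[of _ "c * m"] exI[of _ "\<bar>c\<bar> * s"]) simp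
qed

lemma gauss_unscale:
  assumes sets: "sets \<nu> = sets borel" and G: "is_gaussian (distr \<nu> borel (\<lambda>x. x / d))" and d: "d \<noteq> 0"
  shows "is_gaussian \<nu>"
proof -
  have "distr (distr \<nu> borel (\<lambda>x. x / d)) borel (\<lambda>x. d * x) = distr \<nu> borel ((\<lambda>x. d * x) \<circ> (\<lambda>x. x / d))"
    by (rule distr_distr) (simp_all add: measurable_cong_sets[OF sets refl])
  also have "\<dots> = distr \<nu> borel (\<lambda>x. x)" using d by (simp add: o_def)
  also have "\<dots> = \<nu>" by (rule distr_id2) (simp add: sets)
  finally show ?thesis using gauss_scale[OF G d] by simp
qed



lemma perm_vec_entry:
  fixes v :: "real^'n::finite"
  shows "((\<chi> i j. if j = \<sigma> i then c i else 0) *v v) $ i = c i * v $ (\<sigma> i)"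
proof -
  have "((\<chi> i j. if j = \<sigma> i then c i else 0) *v v) $ i = (\<Sum>j\<in>UNIV. (if j = \<sigma> i then c i else 0) * v $ j)"
    unfolding matrix_vector_mult_def by simp
  also have "\<dots> = (\<Sum>j\<in>UNIV. (if j = \<sigma> i then c i * v $ j else 0))"
    by (rule sum.cong) auto
  also have "\<dots> = c i * v $ (\<sigma> i)" by (simp add: sum.delta')
  finally show ?thesis .
qed

lemma comp_meas:
  assumes "\<And>i. sets (M i) = sets (borel :: real measure)"
  shows "(\<lambda>e. e j) \<in> measurable (PiM UNIV M) borel"
proof -
  have "(\<lambda>e. e j) \<in> measurable (PiM UNIV M) (M j)" by (rule measurable_component_singleton) simp
  then show ?thesis by (subst measurable_cong_sets[OF refl assms[of j, symmetric]])
qed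

lemma dir2:
  fixes G1 G2 :: "('n::finite \<times> 'n) set"
  assumes nl1: "no_self_loops G1" and nl2: "no_self_loops G2" and bij: "bij \<sigma>"
    and rel: "\<And>i k. (mat 1 + adj_matrix G2) $ i $ k = (mat 1 + adj_matrix G1) $ (\<sigma> i) $ k"
  shows "lsem_models G1 \<subseteq> lsem_models G2"
proof
  fix m assume "m \<in> lsem_models G1"
  then obtain W1 \<mu>1 where m: "m = distr (PiM UNIV \<mu>1) borel (\<lambda>e. matrix_inv (mat 1 - W1) *v vec_lambda e)"
    and W1: "lsem_weights G1 W1" and N1: "lsem_noise \<mu>1"
    unfolding lsem_models_def by blast
  have inv1: "invertible (mat 1 - W1)" using W1 unfolding lsem_weights_def by blast
  have inj: "inj \<sigma>" using bij by (simp add: bij_is_inj)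
  have diag: "(mat 1 + adj_matrix G2) $ i $ i = 1" for i
    using nl2 by (simp add: mat1_entry adj_entry no_self_loops_def)
  define D where "D i = (mat 1 - W1) $ (\<sigma> i) $ i" for i
  have Dnz: "D i \<noteq> 0" for i
    using weights_pattern(1)[OF nl1 W1, of "\<sigma> i" i] rel[of i i] diag[of i] unfolding D_def by simp
  define Mx :: "real^'n^'n" where "Mx = (\<chi> i j. if j = \<sigma> i then 1 / D i else 0)"
  define Nx :: "real^'n^'n" where "Nx = (\<chi> j i. if j = \<sigma> i then D i else 0)"
  have "Mx ** Nx = mat 1"
  proof (unfold vec_eq_iff, intro allI)
    fix i i'
    have "(Mx ** Nx) $ i $ i' = (1 / D i) * Nx $ (\<sigma> i) $ i'"
      unfolding Mx_def by (rule perm_mult_entry)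
    also have "\<dots> = (if i = i' then 1 else 0)"
      unfolding Nx_def using Dnz[of i] inj by (auto dest: injD)
    finally show "(Mx ** Nx) $ i $ i' = mat 1 $ i $ i'" by (simp add: mat1_entry)
  qed
  then have invM: "invertible Mx" using invertible_right_inverse by blast
  define W2 where "W2 = mat 1 - Mx ** (mat 1 - W1)"
  have IW2: "mat 1 - W2 = Mx ** (mat 1 - W1)" by (simp add: W2_def)
  have inv2: "invertible (mat 1 - W2)" unfolding IW2 by (rule invertible_mult[OF invM inv1])
  have ent: "(mat 1 - W2) $ i $ k = (1 / D i) * (mat 1 - W1) $ (\<sigma> i) $ k" for i k
    unfolding IW2 Mx_def by (rule perm_mult_entry)
  have W2e: "W2 $ i $ k = (if i = k then 1 else 0) - (mat 1 - W2) $ i $ k" for i k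
    by (simp add: mat1_entry)
  have pat2: "W2 $ i $ k \<noteq> 0 \<longleftrightarrow> adj_matrix G2 $ i $ k = 1" for i k
  proof (cases "i = k")
    case True
    have "(mat 1 - W2) $ i $ k = 1" using ent[of i k] Dnz[of i] True unfolding D_def by simp
    then have "W2 $ i $ k = 0" using W2e[of i k] True by simp
    moreover have "adj_matrix G2 $ i $ k = 0" using nl2 True by (simp add: adj_entry no_self_loops_def)
    ultimately show ?thesis by simp
  next
    case False
    have a: "W2 $ i $ k = - ((mat 1 - W2) $ i $ k)" using W2e[of i k] False by simp
    have b: "(mat 1 - W2) $ i $ k \<noteq> 0 \<longleftrightarrow> (mat 1 - W1) $ (\<sigma> i) $ k \<noteq> 0"
      using ent[of i k] Dnz[of i] by simp
    have c: "(mat 1 + adj_matrix G2) $ i $ k = adj_matrix G2 $ i $ k" using False by (simp add: mat1_entry)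
    show ?thesis using a b c weights_pattern(1)[OF nl1 W1, of "\<sigma> i" k] rel[of i k] by simp
  qed
  have W2w: "lsem_weights G2 W2" unfolding lsem_weights_def using pat2 inv2 by blast
  define \<mu>2 where "\<mu>2 i = distr (\<mu>1 (\<sigma> i)) borel (\<lambda>x. x / D i)" for i
  have meas_div: "(\<lambda>x. x / D i) \<in> measurable (\<mu>1 j) borel" for i j
  proof -
    have "(\<lambda>x. x / D i) \<in> measurable borel borel" by simp
    then show ?thesis by (subst measurable_cong_sets[OF noise_props(2)[OF N1, of j] refl])
  qed
  have ps2: "prob_space (\<mu>2 i)" for i unfolding \<mu>2_def
    by (rule prob_space.prob_space_distr[OF noise_props(1)[OF N1] meas_div])
  have sets2: "sets (\<mu>2 i) = sets borel" for i unfolding \<mu>2_def by simp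
  have space2: "space (\<mu>2 i) = UNIV" for i unfolding \<mu>2_def by simp
  have gsub: "{i. is_gaussian (\<mu>2 i)} \<subseteq> \<sigma> -` {j. is_gaussian (\<mu>1 j)}"
  proof
    fix i assume "i \<in> {i. is_gaussian (\<mu>2 i)}"
    then have G: "is_gaussian (distr (\<mu>1 (\<sigma> i)) borel (\<lambda>x. x / D i))" unfolding \<mu>2_def by simp
    show "i \<in> \<sigma> -` {j. is_gaussian (\<mu>1 j)}" using gauss_unscale[OF noise_props(2)[OF N1] G Dnz] by simp
  qed
  have "card {i. is_gaussian (\<mu>2 i)} \<le> card (\<sigma> -` {j. is_gaussian (\<mu>1 j)})"
    by (rule card_mono[OF _ gsub]) simp
  also have "\<dots> = card {j. is_gaussian (\<mu>1 j)}"
    by (rule card_vimage_inj[OF inj]) (use bij in \<open>simp add: bij_def\<close>)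
  also have "\<dots> \<le> 1" using N1 unfolding lsem_noise_def by blast
  finally have N2: "lsem_noise \<mu>2" unfolding lsem_noise_def using ps2 sets2 by blast
  define h where "h e = (\<lambda>i. e (\<sigma> i) / D i)" for e :: "'n \<Rightarrow> real"
  have hmeas: "h \<in> measurable (PiM UNIV \<mu>1) (PiM UNIV \<mu>2)"
    unfolding h_def
  proof (rule measurable_PiM_single')
    fix i :: 'n
    have "(\<lambda>e. e (\<sigma> i) / D i) \<in> borel_measurable (PiM UNIV \<mu>1)"
      using comp_meas[OF noise_props(2)[OF N1], of "\<sigma> i"] by simp
    then show "(\<lambda>e. e (\<sigma> i) / D i) \<in> measurable (PiM UNIV \<mu>1) (\<mu>2 i)"
      by (subst measurable_cong_sets[OF refl sets2])
  next
    show "(\<lambda>\<omega> i. \<omega> (\<sigma> i) / D i) \<in> space (PiM UNIV \<mu>1) \<rightarrow> (\<Pi>\<^sub>E i\<in>UNIV. space (\<mu>2 i))"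
      by (simp add: space2)
  qed
  interpret P1: product_prob_space \<mu>1 by (rule product_prob_spaceI) (rule noise_props(1)[OF N1])
  interpret P2: product_prob_space \<mu>2 by (rule product_prob_spaceI) (rule ps2)
  have sp1: "space (PiM UNIV \<mu>1) = UNIV" using noise_props(3)[OF N1] by (simp add: space_PiM PiE_UNIV_domain)
  have PiM_eq: "distr (PiM UNIV \<mu>1) (PiM UNIV \<mu>2) h = PiM UNIV \<mu>2"
  proof (rule P2.PiM_eqI)
    show "finite (UNIV :: 'n set)" by simp
    show "sets (distr (PiM UNIV \<mu>1) (PiM UNIV \<mu>2) h) = sets (PiM UNIV \<mu>2)" by simp
  next
    fix A assume A: "\<And>i. i \<in> UNIV \<Longrightarrow> A i \<in> sets (\<mu>2 i)"
    define B where "B j = (\<lambda>x. x / D (inv \<sigma> j)) -` A (inv \<sigma> j)" for j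
    have invs: "inv \<sigma> (\<sigma> i) = i" for i using inj by (simp add: inv_f_f)
    have sinv: "\<sigma> (inv \<sigma> j) = j" for j using bij by (simp add: bij_def surj_f_inv_f)
    have pre: "h -` PiE UNIV A \<inter> space (PiM UNIV \<mu>1) = PiE UNIV B"
    proof -
      have "e \<in> h -` PiE UNIV A \<longleftrightarrow> e \<in> PiE UNIV B" for e
      proof -
        have "e \<in> h -` PiE UNIV A \<longleftrightarrow> (\<forall>i. e (\<sigma> i) / D i \<in> A i)"
          unfolding h_def by (simp add: PiE_UNIV_domain Pi_iff)
        also have "\<dots> \<longleftrightarrow> (\<forall>j. e j / D (inv \<sigma> j) \<in> A (inv \<sigma> j))"
        proof (intro iffI allI)
          fix j assume H: "\<forall>i. e (\<sigma> i) / D i \<in> A i"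
          show "e j / D (inv \<sigma> j) \<in> A (inv \<sigma> j)" using H[rule_format, of "inv \<sigma> j"] unfolding sinv .
        next
          fix i assume H: "\<forall>j. e j / D (inv \<sigma> j) \<in> A (inv \<sigma> j)"
          show "e (\<sigma> i) / D i \<in> A i" using H[rule_format, of "\<sigma> i"] unfolding invs .
        qed
        also have "\<dots> \<longleftrightarrow> e \<in> PiE UNIV B" unfolding B_def by (simp add: PiE_UNIV_domain Pi_iff)
        finally show ?thesis .
      qed
      then show ?thesis unfolding sp1 by blast
    qed
    have Bs: "B j \<in> sets (\<mu>1 j)" for j
    proof -
      have "(\<lambda>x. x / D (inv \<sigma> j)) -` A (inv \<sigma> j) \<inter> space borel \<in> sets borel"
        by (rule measurable_sets[of _ borel borel]) (use A sets2 in auto)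
      then show ?thesis unfolding B_def using noise_props(2)[OF N1, of j] by simp
    qed
    have "emeasure (distr (PiM UNIV \<mu>1) (PiM UNIV \<mu>2) h) (PiE UNIV A)
        = emeasure (PiM UNIV \<mu>1) (PiE UNIV B)"
      using A by (subst emeasure_distr[OF hmeas]) (auto simp: pre)
    also have "\<dots> = (\<Prod>j\<in>UNIV. emeasure (\<mu>1 j) (B j))"
      by (rule P1.emeasure_PiM) (auto intro: Bs)
    also have "\<dots> = (\<Prod>i\<in>UNIV. emeasure (\<mu>1 (\<sigma> i)) (B (\<sigma> i)))"
      by (rule prod.reindex_bij_betw[symmetric]) (use bij in \<open>simp add: bij_betw_def\<close>)
    also have "\<dots> = (\<Prod>i\<in>UNIV. emeasure (\<mu>2 i) (A i))"
    proof (rule prod.cong[OF refl])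
      fix i :: 'n
      have "emeasure (\<mu>2 i) (A i) = emeasure (\<mu>1 (\<sigma> i)) ((\<lambda>x. x / D i) -` A i \<inter> space (\<mu>1 (\<sigma> i)))"
        unfolding \<mu>2_def by (rule emeasure_distr[OF meas_div]) (use A sets2 in auto)
      then show "emeasure (\<mu>1 (\<sigma> i)) (B (\<sigma> i)) = emeasure (\<mu>2 i) (A i)"
        unfolding B_def invs using noise_props(3)[OF N1] by simp
    qed
    finally show "emeasure (distr (PiM UNIV \<mu>1) (PiM UNIV \<mu>2) h) (PiE UNIV A) = (\<Prod>i\<in>UNIV. emeasure (\<mu>2 i) (A i))" .
  qed
  have pt: "matrix_inv (mat 1 - W2) *v vec_lambda (h e) = matrix_inv (mat 1 - W1) *v vec_lambda e" for e
  proof -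
    have v: "vec_lambda (h e) = Mx *v vec_lambda e"
      unfolding vec_eq_iff Mx_def h_def perm_vec_entry by simp
    have ii: "(mat 1 - W1) *v (matrix_inv (mat 1 - W1) *v vec_lambda e) = vec_lambda e"
      by (simp add: matrix_vector_mul_assoc matrix_inv_props(1)[OF inv1])
    have "(mat 1 - W2) *v (matrix_inv (mat 1 - W1) *v vec_lambda e) = Mx *v vec_lambda e"
      unfolding IW2 matrix_vector_mul_assoc[symmetric] ii ..
    then show ?thesis unfolding matrix_inv_apply_eq[OF inv2] v by simp
  qed
  have "distr (PiM UNIV \<mu>2) borel (\<lambda>e. matrix_inv (mat 1 - W2) *v vec_lambda e)
      = distr (distr (PiM UNIV \<mu>1) (PiM UNIV \<mu>2) h) borel (\<lambda>e. matrix_inv (mat 1 - W2) *v vec_lambda e)"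
    unfolding PiM_eq ..
  also have "\<dots> = distr (PiM UNIV \<mu>1) borel ((\<lambda>e. matrix_inv (mat 1 - W2) *v vec_lambda e) \<circ> h)"
    by (rule distr_distr[OF model_meas[OF sets2] hmeas])
  also have "\<dots> = m" unfolding m
    by (rule distr_cong) (simp_all add: pt)
  finally show "m \<in> lsem_models G2" unfolding lsem_models_def using W2w N2 by blast
qed



lemma perm_from_sigma:
  fixes \<sigma> :: "'n::finite \<Rightarrow> 'n"
  assumes bij: "bij \<sigma>"
  shows "permutation_matrix ((\<chi> i j. if j = \<sigma> i then 1 else 0) :: real^'n^'n)"
proof -
  have sinv: "\<sigma> (inv \<sigma> j) = j" for j using bij by (simp add: bij_def surj_f_inv_f)
  have inj: "inj \<sigma>" using bij by (simp add: bij_is_inj)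
  show ?thesis unfolding permutation_matrix_def
  proof (intro conjI allI)
    fix i j show "(\<chi> i j. if j = \<sigma> i then 1 else (0::real)) $ i $ j = 0 \<or> (\<chi> i j. if j = \<sigma> i then 1 else (0::real)) $ i $ j = 1"
      by simp
  next
    fix i show "\<exists>!j. (\<chi> i j. if j = \<sigma> i then 1 else (0::real)) $ i $ j = 1" by simp
  next
    fix j show "\<exists>!i. (\<chi> i j. if j = \<sigma> i then 1 else (0::real)) $ i $ j = 1"
    proof (rule ex1I[of _ "inv \<sigma> j"])
      show "(\<chi> i j. if j = \<sigma> i then 1 else (0::real)) $ inv \<sigma> j $ j = 1" using sinv by simp
    next
      fix i assume "(\<chi> i j. if j = \<sigma> i then 1 else (0::real)) $ i $ j = 1"
      then have "j = \<sigma> i" by (simp split: if_splits)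
      then show "i = inv \<sigma> j" using inj by (simp add: inv_f_f)
    qed
  qed
qed

lemma sigma_from_perm:
  fixes P :: "real^'n::finite^'n"
  assumes P: "permutation_matrix P"
  shows "\<exists>\<sigma>. bij \<sigma> \<and> (\<forall>X :: real^'n^'n. \<forall>i k. (P ** X) $ i $ k = X $ (\<sigma> i) $ k)"
proof -
  define \<sigma> where "\<sigma> i = (THE j. P $ i $ j = 1)" for i
  have s1: "P $ i $ (\<sigma> i) = 1" for i
  proof -
    have ex: "\<exists>!j. P $ i $ j = 1" using P unfolding permutation_matrix_def by blast
    show ?thesis unfolding \<sigma>_def by (rule theI'[OF ex])
  qed
  have s2: "P $ i $ j = 1 \<Longrightarrow> j = \<sigma> i" for i j
    using P s1[of i] unfolding permutation_matrix_def by blast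
  have Pe: "P $ i $ j = (if j = \<sigma> i then 1 else 0)" for i j
  proof (cases "j = \<sigma> i")
    case True then show ?thesis using s1[of i] by simp
  next
    case False
    then have "P $ i $ j \<noteq> 1" using s2[of i j] by blast
    moreover have "P $ i $ j = 0 \<or> P $ i $ j = 1" using P unfolding permutation_matrix_def by blast
    ultimately show ?thesis using False by simp
  qed
  have Pform: "P = (\<chi> i j. if j = \<sigma> i then 1 else 0)" by (simp add: vec_eq_iff Pe)
  have "inj \<sigma>"
  proof (rule injI)
    fix a b assume "\<sigma> a = \<sigma> b"
    then have "P $ a $ (\<sigma> a) = 1" "P $ b $ (\<sigma> a) = 1" using s1[of a] s1[of b] by simp_all
    then show "a = b" using P unfolding permutation_matrix_def by blast
  qed
  then have "bij \<sigma>" using finite_UNIV_inj_surj[OF finite] bij_def by blast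
  moreover have "(P ** X) $ i $ k = X $ (\<sigma> i) $ k" for X :: "real^'n^'n" and i k
    unfolding Pform using perm_mult_entry[of \<sigma> "\<lambda>_. 1" X i k] by simp
  ultimately show ?thesis by blast
qed

theorem proposition2:
  fixes G1 G2 :: "('n::finite \<times> 'n) set"
  assumes "no_self_loops G1" and "no_self_loops G2"
  shows "lsem_models G1 = lsem_models G2 \<longleftrightarrow>
         (\<exists>P. permutation_matrix P \<and> mat 1 + adj_matrix G2 = P ** (mat 1 + adj_matrix G1))"
proof
  assume "lsem_models G1 = lsem_models G2"
  then obtain \<sigma> where bij: "bij \<sigma>"
    and rel: "\<forall>i k. (mat 1 + adj_matrix G2) $ i $ k = (mat 1 + adj_matrix G1) $ (\<sigma> i) $ k"
    using dir1[OF assms] by blast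
  define P :: "real^'n^'n" where "P = (\<chi> i j. if j = \<sigma> i then 1 else 0)"
  have "permutation_matrix P" unfolding P_def by (rule perm_from_sigma[OF bij])
  moreover have "mat 1 + adj_matrix G2 = P ** (mat 1 + adj_matrix G1)"
    unfolding vec_eq_iff P_def using rel perm_mult_entry[of \<sigma> "\<lambda>_. 1"] by simp
  ultimately show "\<exists>P. permutation_matrix P \<and> mat 1 + adj_matrix G2 = P ** (mat 1 + adj_matrix G1)"
    by blast
next
  assume "\<exists>P. permutation_matrix P \<and> mat 1 + adj_matrix G2 = P ** (mat 1 + adj_matrix G1)"
  then obtain P where P: "permutation_matrix P" and eq: "mat 1 + adj_matrix G2 = P ** (mat 1 + adj_matrix G1)"
    by blast
  obtain \<sigma> where bij: "bij \<sigma>" and Pm: "\<forall>X :: real^'n^'n. \<forall>i k. (P ** X) $ i $ k = X $ (\<sigma> i) $ k"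
    using sigma_from_perm[OF P] by blast
  have rel: "(mat 1 + adj_matrix G2) $ i $ k = (mat 1 + adj_matrix G1) $ (\<sigma> i) $ k" for i k
    using Pm eq by simp
  have sinv: "\<sigma> (inv \<sigma> j) = j" for j using bij by (simp add: bij_def surj_f_inv_f)
  have rel': "(mat 1 + adj_matrix G1) $ j $ k = (mat 1 + adj_matrix G2) $ (inv \<sigma> j) $ k" for j k
    using rel[of "inv \<sigma> j" k] unfolding sinv by simp
  have "lsem_models G1 \<subseteq> lsem_models G2" by (rule dir2[OF assms bij rel])
  moreover have "lsem_models G2 \<subseteq> lsem_models G1"
    by (rule dir2[OF assms(2,1) bij_imp_bij_inv[OF bij] rel'])
  ultimately show "lsem_models G1 = lsem_models G2" by blast
qed

end
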